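(* Let $\mathsf A$ be an MDCS instance and let $\mathsf A'=\mathsf A/E_e$ be obtained by contracting encoder $E_e$, with encoder set $\mathcal E'=\mathcal E\setminus\{E_e\}$. Writing $\mathrm{Proj}'$ for projection onto the coordinates $(H(X_k))_{k\in[[K]]}$ and $(R_i)_{i\in\mathcal E'}$, $$\mathcal R(\mathsf A')=\mathrm{Proj}'\,\mathcal R(\mathsf A),\quad \mathcal R_q(\mathsf A')=\mathrm{Proj}'\,\mathcal R_q(\mathsf A),\quad \mathcal R_{s,q}(\mathsf A')\supseteq\mathrm{Proj}'\,\mathcal R_{s,q}(\mathsf A),\quad \mathcal R_{sp}(\mathsf A')=\mathrm{Proj}'\,\mathcal R_{sp}(\mathsf A).$$
   Context: An MDCS instance $\mathsf{A}=(\mathbf X_{[[K]]},\mathcal E,\mathcal D,\mathbf L,\mathcal G)$ consists of $K$ mutually independent sources $X_1,\dots,X_K$, a finite set $\mathcal E$ of encoders $E_e$ (each has access to all sources and outputs a message $U_e$), a finite set $\mathcal D$ of decoders $D_d$, a level $\mathrm{Lev}(D_d)\in\{1,\dots,K\}$ for each decoder, and an edge set $\mathcal G\subseteq\mathcal E\times\mathcal D$; $\mathrm{Fan}(D_d)=\{E_e:(E_e,D_d)\in\mathcal G\}$, $\mathrm{Fan}(E_e)=\{D_d:(E_e,D_d)\in\mathcal G\}$; $D_d$ must recover $X_1,\dots,X_{\mathrm{Lev}(D_d)}$ from $U_e$, $E_e\in\mathrm{Fan}(D_d)$. Encoder contraction $\mathsf A/E_e$: $\mathcal E'=\mathcal E\setminus\{E_e\}$;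 $\mathcal D'=\mathcal D\setminus\mathrm{Fan}(E_e)$; levels of surviving decoders unchanged; edges restricted to $\mathcal E'\times\mathcal D'$. Rate regions: let $N=K+|\mathcal E|$ with random variables $Y_1,\dots,Y_K,U_e$ ($e\in\mathcal E$); $\mathbf h\in\mathbb R^{2^N-1}$ indexed by nonempty subsets of them; $h_{\mathcal A|\mathcal B}=h_{\mathcal A\cup\mathcal B}-h_{\mathcal B}$. $\mathcal L_1=\{\mathbf h\ge0:h_{Y_1\cdots Y_K}=\sum_kh_{Y_k}\}$, $\mathcal L_2=\{\mathbf h\ge0:h_{U_e|Y_1\cdots Y_K}=0\ \forall e\}$, $\mathcal L_5=\{\mathbf h\ge0:h_{Y_1\cdots Y_{\mathrm{Lev}(D_d)}|(U_e)_{E_e\in\mathrm{Fan}(D_d)}}=0\ \forall d\}$, $\mathcal L_{125}=\mathcal L_1\cap\mathcal L_2\cap\mathcal L_5$, $\mathcal L_4''=\{(\mathbf h,\mathbf R)\in\mathbb R^{2^N-1}_{\ge0}\times\mathbb R^{|\mathcal E|}_{\ge0}:R_e\ge h_{U_e}\ \forall e\}$. All regions live in coordinates $((H(X_k))_k,(R_e)_e)$, where $H(X_k)$ denotes the coordinate $h_{Y_k}$; $\mathrm{Proj}$ is coordinate projection onto these. $\Gamma^*_N$ is the set of entropic vectors, $\overline{\mathrm{con}}$ the closure of the conic hull. $\Gamma_N^q$: conic hull of rank functions $\mathcal A\mapsto\mathrm{rank}(\mathbb A_{:,\mathcal A})$ of matrices $\mathbb A$ over $\mathbb F_q$ with $N$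 columns. $\Gamma^q_{N,\infty}$: conic hull of vectors $\mathcal A\mapsto\dim\sum_{i\in\mathcal A}V_i$ for subspaces $V_1,\dots,V_N$ of a finite-dimensional $\mathbb F_q$-vector space. Then $\mathcal R(\mathsf A)=\mathrm{Proj}(\overline{\mathrm{con}}(\Gamma^*_N\cap\mathcal L_1\cap\mathcal L_2)\cap\mathcal L_5\cap\mathcal L_4'')$ (the rate region: achievable source-entropy/encoder-rate tuples); $\mathcal R_q(\mathsf A)=\mathrm{Proj}(\Gamma^q_{N,\infty}\cap\mathcal L_{125}\cap\mathcal L_4'')$ (achievable by vector $\mathbb F_q$-linear codes); $\mathcal R_{s,q}(\mathsf A)=\mathrm{Proj}(\Gamma^q_N\cap\mathcal L_{125}\cap\mathcal L_4'')$ (achievable by scalar $\mathbb F_q$-linear codes); $\mathcal R_{sp}(\mathsf A)=\mathrm{Proj}_{(R_e),(H(X_k))}\{(R_e,H(X_k),R_e^{X_k})_{e,k}\ge0: R_e=\sum_{i=1}^KR_e^{X_i}\ \forall e;\ \sum_{e:E_e\in\mathrm{Fan}(D_d)}R_e^{X_i}\ge H(X_i)\ \forall d\in\mathcal D,\ i\le\mathrm{Lev}(D_d)\}$ (superposition coding region). *)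

theory Defs
  imports "HOL-Probability.Probability"
begin

record ('e, 'd) mdcs =
  mK   :: nat                  \<comment> \<open>number of sources X_1 .. X_K\<close>
  mE   :: "'e set"
  mD   :: "'d set"
  mLev :: "'d \<Rightarrow> nat"
  mG   :: "('e \<times> 'd) set"

definition mdcs_valid :: "('e, 'd) mdcs \<Rightarrow> bool" where
  "mdcs_valid A \<longleftrightarrow> 1 \<le> mK A \<and> finite (mE A) \<and> finite (mD A)
     \<and> (\<forall>d\<in>mD A. 1 \<le> mLev A d \<and> mLev A d \<le> mK A)
     \<and> mG A \<subseteq> mE A \<times> mD A"

definition fanD :: "('e, 'd) mdcs \<Rightarrow> 'd \<Rightarrow> 'e set" where
  "fanD A d = {e \<in> mE A. (e, d) \<in> mG A}"

definition fanE :: "('e, 'd) mdcs \<Rightarrow> 'e \<Rightarrow> 'd set" where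
  "fanE A e = {d \<in> mD A. (e, d) \<in> mG A}"

definition contract :: "('e, 'd) mdcs \<Rightarrow> 'e \<Rightarrow> ('e, 'd) mdcs" where
  "contract A e =
     A\<lparr> mE := mE A - {e},
        mD := mD A - fanE A e,
        mG := mG A \<inter> ((mE A - {e}) \<times> (mD A - fanE A e)) \<rparr>"

text \<open>The N = K + |E| random variables: Y_k (k = 1..K) and U_e (e in E).\<close>
datatype 'e rv = Y nat | U 'e

definition gset :: "('e, 'd) mdcs \<Rightarrow> 'e rv set" where
  "gset A = Y ` {1..mK A} \<union> U ` mE A"

text \<open>A vector h in R^(2^N - 1) is represented as a function on sets of variables
  which vanishes outside the nonempty subsets of the ground set.\<close>
definition normv :: "'e rv set \<Rightarrow> ('e rv set \<Rightarrow> real) \<Rightarrow> ('e rv set \<Rightarrow> real)" where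
  "normv V g = (\<lambda>S. if S \<noteq> {} \<and> S \<subseteq> V then g S else 0)"

definition Ysrc :: "nat \<Rightarrow> 'e rv set" where
  "Ysrc n = Y ` {1..n}"

definition condh :: "('e rv set \<Rightarrow> real) \<Rightarrow> 'e rv set \<Rightarrow> 'e rv set \<Rightarrow> real" where
  "condh h S T = h (S \<union> T) - h T"

definition conic_hull :: "('a \<Rightarrow> real) set \<Rightarrow> ('a \<Rightarrow> real) set" where
  "conic_hull S = {x. \<exists>T c. finite T \<and> T \<subseteq> S \<and> (\<forall>t\<in>T. 0 \<le> c t)
                        \<and> x = (\<lambda>a. \<Sum>t\<in>T. c t * t a)}"

definition pmf_entropy :: "'a pmf \<Rightarrow> real" where
  "pmf_entropy p = (\<Sum>x\<in>set_pmf p. - pmf p x * log 2 (pmf p x))"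

text \<open>Joint distributions of finitely-valued random variables (values coded in nat);
  the entropy of the subfamily S is the entropy of the marginal on S.\<close>
definition entropic :: "('e, 'd) mdcs \<Rightarrow> ('e rv set \<Rightarrow> real) set" where
  "entropic A = {normv (gset A) (\<lambda>S. pmf_entropy (map_pmf (\<lambda>\<omega>. restrict \<omega> S) p))
                  | p :: ('e rv \<Rightarrow> nat) pmf. finite (set_pmf p)}"

definition f_span :: "(nat \<Rightarrow> 'f::field) set \<Rightarrow> (nat \<Rightarrow> 'f) set" where
  "f_span S = {v. \<exists>T c. finite T \<and> T \<subseteq> S \<and> v = (\<lambda>j. \<Sum>u\<in>T. c u * u j)}"

text \<open>Rank (dimension of the span) of a set of vectors.\<close>
definition f_rank :: "(nat \<Rightarrow> 'f::field) set \<Rightarrow> nat" where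
  "f_rank S = (LEAST n. \<exists>T. T \<subseteq> S \<and> finite T \<and> card T = n \<and> S \<subseteq> f_span T)"

text \<open>Vectors in F^m (with m rows), as functions nat => F vanishing from m on.\<close>
definition fspace :: "nat \<Rightarrow> (nat \<Rightarrow> 'f::field) set" where
  "fspace m = {v. \<forall>j\<ge>m. v j = 0}"

definition f_subspace :: "nat \<Rightarrow> (nat \<Rightarrow> 'f::field) set \<Rightarrow> bool" where
  "f_subspace m W \<longleftrightarrow> W \<subseteq> fspace m \<and> (\<lambda>_. 0) \<in> W
     \<and> (\<forall>v\<in>W. \<forall>w\<in>W. (\<lambda>j. v j + w j) \<in> W) \<and> (\<forall>c. \<forall>v\<in>W. (\<lambda>j. c * v j) \<in> W)"

text \<open>Gamma^q_N: conic hull of rank functions of matrices over F_q whose columns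
  are indexed by the N variables (column i is col i in F^m).\<close>
definition Gamma_scalar :: "'f::{field,finite} itself \<Rightarrow> ('e, 'd) mdcs \<Rightarrow> ('e rv set \<Rightarrow> real) set" where
  "Gamma_scalar _ A = conic_hull
     {normv (gset A) (\<lambda>S. real (f_rank (col ` S)))
      | (col :: 'e rv \<Rightarrow> nat \<Rightarrow> 'f) m. \<forall>i\<in>gset A. col i \<in> fspace m}"

text \<open>Gamma^q_{N,\<infinity>}: conic hull of the vectors S \<mapsto> dim (sum of V_i, i in S)
  for subspaces V_i of F_q^m.\<close>
definition Gamma_vector :: "'f::{field,finite} itself \<Rightarrow> ('e, 'd) mdcs \<Rightarrow> ('e rv set \<Rightarrow> real) set" where
  "Gamma_vector _ A = conic_hull
     {normv (gset A) (\<lambda>S. real (f_rank (f_span (\<Union>i\<in>S. Vs i))))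
      | (Vs :: 'e rv \<Rightarrow> (nat \<Rightarrow> 'f) set) m. \<forall>i\<in>gset A. f_subspace m (Vs i)}"

definition nonneg :: "('a \<Rightarrow> real) \<Rightarrow> bool" where
  "nonneg h \<longleftrightarrow> (\<forall>a. 0 \<le> h a)"

definition L1 :: "('e, 'd) mdcs \<Rightarrow> ('e rv set \<Rightarrow> real) set" where
  "L1 A = {h. nonneg h \<and> h (Ysrc (mK A)) = (\<Sum>k\<in>{1..mK A}. h {Y k})}"

definition L2 :: "('e, 'd) mdcs \<Rightarrow> ('e rv set \<Rightarrow> real) set" where
  "L2 A = {h. nonneg h \<and> (\<forall>e\<in>mE A. condh h {U e} (Ysrc (mK A)) = 0)}"

definition L5 :: "('e, 'd) mdcs \<Rightarrow> ('e rv set \<Rightarrow> real) set" where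
  "L5 A = {h. nonneg h \<and>
     (\<forall>d\<in>mD A. condh h (Ysrc (mLev A d)) (U ` fanD A d) = 0)}"

definition L125 :: "('e, 'd) mdcs \<Rightarrow> ('e rv set \<Rightarrow> real) set" where
  "L125 A = L1 A \<inter> L2 A \<inter> L5 A"

text \<open>Rate vectors R in R^{|E|}_{\<ge>0}, represented as functions vanishing outside E.\<close>
definition L4 :: "('e, 'd) mdcs \<Rightarrow> (('e rv set \<Rightarrow> real) \<times> ('e \<Rightarrow> real)) set" where
  "L4 A = {(h, R). nonneg h \<and> nonneg R \<and> (\<forall>e. e \<notin> mE A \<longrightarrow> R e = 0)
                 \<and> (\<forall>e\<in>mE A. h {U e} \<le> R e)}"

text \<open>Points of rate regions: (H, R) with H k = H(X_k) for k in 1..K (0 otherwise)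
  and R e the rate of encoder e for e in E (0 otherwise).\<close>
definition Proj :: "('e, 'd) mdcs \<Rightarrow> ('e rv set \<Rightarrow> real) \<times> ('e \<Rightarrow> real)
                    \<Rightarrow> (nat \<Rightarrow> real) \<times> ('e \<Rightarrow> real)" where
  "Proj A hR = ((\<lambda>k. if k \<in> {1..mK A} then fst hR {Y k} else 0), snd hR)"

definition region_of :: "('e, 'd) mdcs \<Rightarrow> ('e rv set \<Rightarrow> real) set
                          \<Rightarrow> ((nat \<Rightarrow> real) \<times> ('e \<Rightarrow> real)) set" where
  "region_of A S = Proj A ` {(h, R) \<in> L4 A. h \<in> S}"

definition rate_region :: "('e, 'd) mdcs \<Rightarrow> ((nat \<Rightarrow> real) \<times> ('e \<Rightarrow> real)) set" where
  "rate_region A =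
     region_of A (closure (conic_hull (entropic A \<inter> L1 A \<inter> L2 A)) \<inter> L5 A)"

definition rate_region_q :: "'f::{field,finite} itself \<Rightarrow> ('e, 'd) mdcs
                               \<Rightarrow> ((nat \<Rightarrow> real) \<times> ('e \<Rightarrow> real)) set" where
  "rate_region_q F A = region_of A (Gamma_vector F A \<inter> L125 A)"

definition rate_region_sq :: "'f::{field,finite} itself \<Rightarrow> ('e, 'd) mdcs
                               \<Rightarrow> ((nat \<Rightarrow> real) \<times> ('e \<Rightarrow> real)) set" where
  "rate_region_sq F A = region_of A (Gamma_scalar F A \<inter> L125 A)"

definition rate_region_sp :: "('e, 'd) mdcs \<Rightarrow> ((nat \<Rightarrow> real) \<times> ('e \<Rightarrow> real)) set" where
  "rate_region_sp A = {(H, R). \<exists>Rs :: 'e \<Rightarrow> nat \<Rightarrow> real.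
      (\<forall>k. 0 \<le> H k) \<and> (\<forall>k. k \<notin> {1..mK A} \<longrightarrow> H k = 0)
    \<and> (\<forall>e. 0 \<le> R e) \<and> (\<forall>e. e \<notin> mE A \<longrightarrow> R e = 0)
    \<and> (\<forall>e\<in>mE A. \<forall>k\<in>{1..mK A}. 0 \<le> Rs e k)
    \<and> (\<forall>e\<in>mE A. R e = (\<Sum>i\<in>{1..mK A}. Rs e i))
    \<and> (\<forall>d\<in>mD A. \<forall>i\<in>{1..mLev A d}. (\<Sum>e\<in>fanD A d. Rs e i) \<ge> H i)}"

text \<open>Proj': forget the rate coordinate of encoders outside E'.\<close>
definition proj_enc :: "'e set \<Rightarrow> (nat \<Rightarrow> real) \<times> ('e \<Rightarrow> real) \<Rightarrow> (nat \<Rightarrow> real) \<times> ('e \<Rightarrow> real)" where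
  "proj_enc E' p = (fst p, \<lambda>i. if i \<in> E' then snd p i else 0)"

end

theory Submission
  imports Defs
begin

definition cmap :: "('a set \<Rightarrow> bool) \<Rightarrow> ('a set \<Rightarrow> 'a set) \<Rightarrow> ('a set \<Rightarrow> real) \<Rightarrow> ('a set \<Rightarrow> real)" where
 "cmap P \<sigma> h = (\<lambda>S. if P S then h (\<sigma> S) else 0)"

lemma conic_hull_mono: "X \<subseteq> Z \<Longrightarrow> conic_hull X \<subseteq> conic_hull Z"
  unfolding conic_hull_def by blast

lemma cmap_conic: "cmap P \<sigma> ` conic_hull X \<subseteq> conic_hull (cmap P \<sigma> ` X)"
proof
  fix y assume "y \<in> cmap P \<sigma> ` conic_hull X"
  then obtain T c where T: "finite T" "T \<subseteq> X" "\<forall>t\<in>T. 0 \<le> c t"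
    and y: "y = cmap P \<sigma> (\<lambda>a. \<Sum>t\<in>T. c t * t a)"
    unfolding conic_hull_def by blast
  define c' where "c' s = (\<Sum>t\<in>{t\<in>T. cmap P \<sigma> t = s}. c t)" for s
  have "y = (\<lambda>a. \<Sum>s\<in>cmap P \<sigma> ` T. c' s * s a)"
  proof
    fix a
    have "(\<Sum>s\<in>cmap P \<sigma> ` T. c' s * s a) = (\<Sum>s\<in>cmap P \<sigma> ` T. \<Sum>t\<in>{t\<in>T. cmap P \<sigma> t = s}. c t * cmap P \<sigma> t a)"
      unfolding c'_def by (auto simp: sum_distrib_right intro!: sum.cong)
    also have "\<dots> = (\<Sum>t\<in>T. c t * cmap P \<sigma> t a)"
      using sum.image_gen[OF T(1), of "\<lambda>t. c t * cmap P \<sigma> t a" "cmap P \<sigma>"] by simp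
    also have "\<dots> = y a" by (simp add: y cmap_def)
    finally show "y a = (\<Sum>s\<in>cmap P \<sigma> ` T. c' s * s a)" by simp
  qed
  moreover have "\<forall>s\<in>cmap P \<sigma> ` T. 0 \<le> c' s" unfolding c'_def using T(3) by (auto intro: sum_nonneg)
  ultimately show "y \<in> conic_hull (cmap P \<sigma> ` X)"
    unfolding conic_hull_def using T by blast
qed

lemma cmap_cont: "continuous_on UNIV (cmap P \<sigma>)"
  unfolding cmap_def
proof (intro continuous_on_coordinatewise_then_product)
  fix i show "continuous_on UNIV (\<lambda>x. if P i then x (\<sigma> i) else (0::real))"
    by (cases "P i") (simp_all add: continuous_on_const)
qed

lemma cmap_closure: "cmap P \<sigma> ` closure X \<subseteq> closure (cmap P \<sigma> ` X)"
  by (rule image_closure_subset) (auto intro: continuous_on_subset[OF cmap_cont] closure_subset[THEN subsetD])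

lemma cmap_cl_conic: "cmap P \<sigma> ` closure (conic_hull X) \<subseteq> closure (conic_hull (cmap P \<sigma> ` X))"
  by (meson cmap_closure cmap_conic closure_mono order_trans image_mono)

lemma conic_coord0: "\<forall>x\<in>X. x S = 0 \<Longrightarrow> h \<in> conic_hull X \<Longrightarrow> h S = 0"
  unfolding conic_hull_def by (auto intro!: sum.neutral)

lemma cl_conic_coord0: assumes "\<forall>x\<in>X. x S = 0" "h \<in> closure (conic_hull X)" shows "h S = 0"
proof -
  have "closed {h :: 'a \<Rightarrow> real. h S = 0}"
    by (rule closed_Collect_eq) auto
  moreover have "conic_hull X \<subseteq> {h. h S = 0}" using conic_coord0[OF assms(1)] by auto
  ultimately have "closure (conic_hull X) \<subseteq> {h. h S = 0}" by (rule closure_minimal[rotated])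
  thus ?thesis using assms(2) by auto
qed


lemma normv_cmap: "normv V g = cmap (\<lambda>S. S \<noteq> {} \<and> S \<subseteq> V) id g"
  unfolding normv_def cmap_def by (simp add: fun_eq_iff)

definition sig :: "('e, 'd) mdcs \<Rightarrow> 'e \<Rightarrow> 'e rv set \<Rightarrow> 'e rv set" where
  "sig A e S = (if U e \<in> S then (S - {U e}) \<union> Ysrc (mK A) else S)"

definition res :: "('e, 'd) mdcs \<Rightarrow> 'e \<Rightarrow> ('e rv set \<Rightarrow> real) \<Rightarrow> ('e rv set \<Rightarrow> real)" where
  "res A e = cmap (\<lambda>S. S \<noteq> {} \<and> S \<subseteq> gset (contract A e)) id"

definition ext :: "('e, 'd) mdcs \<Rightarrow> 'e \<Rightarrow> ('e rv set \<Rightarrow> real) \<Rightarrow> ('e rv set \<Rightarrow> real)" where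
  "ext A e = cmap (\<lambda>S. S \<noteq> {} \<and> S \<subseteq> gset A) (sig A e)"

lemma contract_simps [simp]:
  "mK (contract A e) = mK A" "mE (contract A e) = mE A - {e}"
  "mD (contract A e) = mD A - fanE A e" "mLev (contract A e) = mLev A"
  "mG (contract A e) = mG A \<inter> ((mE A - {e}) \<times> (mD A - fanE A e))"
  unfolding contract_def by simp_all

lemma gset_contract: "gset (contract A e) = gset A - {U e}"
  unfolding gset_def by auto

lemma fanD_contract: "d \<in> mD A - fanE A e \<Longrightarrow> fanD (contract A e) d = fanD A d"
  unfolding fanD_def by (auto simp: fanE_def)

lemma fanD_e: "e \<in> mE A \<Longrightarrow> d \<in> mD A \<Longrightarrow> e \<in> fanD A d \<longleftrightarrow> d \<in> fanE A e"
  unfolding fanD_def fanE_def by auto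

lemma Ysrc_ne: "1 \<le> l \<Longrightarrow> Ysrc l \<noteq> {}"
  unfolding Ysrc_def by auto

lemma Ysrc_sub: "l \<le> mK A \<Longrightarrow> Ysrc l \<subseteq> gset A"
  unfolding Ysrc_def gset_def by auto

lemma Ysrc_sub': "l \<le> mK A \<Longrightarrow> Ysrc l \<subseteq> gset (contract A e)"
  unfolding Ysrc_def gset_def by auto

lemma Ysrc_mono: "l \<le> k \<Longrightarrow> Ysrc l \<subseteq> Ysrc k"
  unfolding Ysrc_def by auto

lemma U_notin_Ysrc [simp]: "U e \<notin> Ysrc l"
  unfolding Ysrc_def by auto

lemma Uimg_sub: "F \<subseteq> mE A \<Longrightarrow> U ` F \<subseteq> gset A"
  unfolding gset_def by auto

lemma fanD_sub: "fanD A d \<subseteq> mE A"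
  unfolding fanD_def by auto

lemma res_eq: "S \<subseteq> gset (contract A e) \<Longrightarrow> h {} = 0 \<Longrightarrow> res A e h S = h S"
  unfolding res_def cmap_def by auto

lemma ext_eq: "S \<subseteq> gset A \<Longrightarrow> h {} = 0 \<Longrightarrow> ext A e h S = h (sig A e S)"
  unfolding ext_def cmap_def sig_def by auto

lemma res_nonneg: "nonneg h \<Longrightarrow> nonneg (res A e h)"
  unfolding nonneg_def res_def cmap_def by auto

lemma ext_nonneg: "nonneg h \<Longrightarrow> nonneg (ext A e h)"
  unfolding nonneg_def ext_def cmap_def by auto

lemma res_empty: "res A e h {} = 0" unfolding res_def cmap_def by auto
lemma ext_empty: "ext A e h {} = 0" unfolding ext_def cmap_def by auto


lemma normv_empty [simp]: "normv V g {} = 0" unfolding normv_def by simp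

lemma ent_inj: "inj_on \<phi> (set_pmf q) \<Longrightarrow> pmf_entropy (map_pmf \<phi> q) = pmf_entropy q"
  unfolding pmf_entropy_def by (simp add: sum.reindex pmf_map_inj)

lemma ent_eq:
  assumes "\<And>\<omega>. g1 \<omega> = \<phi> (g2 \<omega>)" "\<And>\<omega>. g2 \<omega> = \<psi> (g1 \<omega>)"
  shows "pmf_entropy (map_pmf g1 p) = pmf_entropy (map_pmf g2 p)"
proof -
  have "g1 = (\<lambda>x. \<phi> (g2 x))" using assms(1) by auto
  hence "map_pmf g1 p = map_pmf \<phi> (map_pmf g2 p)" by (simp add: map_pmf_comp)
  moreover have "inj_on \<phi> (set_pmf (map_pmf g2 p))"
    by (rule inj_onI) (auto, metis assms)
  ultimately show ?thesis by (simp add: ent_inj)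
qed

definition encY :: "nat \<Rightarrow> ('e rv \<Rightarrow> nat) \<Rightarrow> nat" where
  "encY K \<omega> = to_nat (map (\<lambda>k. \<omega> (Y k)) [1..<K+1])"

lemma ent_ext:
  fixes p :: "('e rv \<Rightarrow> nat) pmf"
  assumes "U e \<in> S"
  shows "pmf_entropy (map_pmf (\<lambda>\<omega>. restrict ((fun_upd \<omega> (U e) (encY K \<omega>))) S) p)
       = pmf_entropy (map_pmf (\<lambda>\<omega>. restrict \<omega> ((S - {U e}) \<union> Ysrc K)) p)"
proof (rule ent_eq)
  let ?S' = "(S - {U e}) \<union> Ysrc K"
  fix \<omega> :: "'e rv \<Rightarrow> nat"
  show "restrict ((fun_upd \<omega> (U e) (encY K \<omega>))) S =
     (\<lambda>r v. if v \<in> S then (if v = U e then to_nat (map (\<lambda>k. r (Y k)) [1..<K+1]) else r v) else undefined)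
       (restrict \<omega> ?S')"
  proof
    fix v
    have "map (\<lambda>k. restrict \<omega> ?S' (Y k)) [1..<K+1] = map (\<lambda>k. \<omega> (Y k)) [1..<K+1]"
      by (rule map_cong) (auto simp: Ysrc_def)
    thus "restrict ((fun_upd \<omega> (U e) (encY K \<omega>))) S v = (\<lambda>r v. if v \<in> S then (if v = U e then to_nat (map (\<lambda>k. r (Y k)) [1..<K+1]) else r v) else undefined)
       (restrict \<omega> ?S') v"
      by (auto simp: encY_def)
  qed
  show "restrict \<omega> ?S' = (\<lambda>r v. if v \<in> ?S' then (if v \<in> S then r v else
      (case v of Y k \<Rightarrow> (from_nat (r (U e)) :: nat list) ! (k - 1) | U _ \<Rightarrow> undefined)) else undefined)
     (restrict ((fun_upd \<omega> (U e) (encY K \<omega>))) S)"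
  proof
    fix v
    show "restrict \<omega> ?S' v = (\<lambda>r v. if v \<in> ?S' then (if v \<in> S then r v else
      (case v of Y k \<Rightarrow> (from_nat (r (U e)) :: nat list) ! (k - 1) | U _ \<Rightarrow> undefined)) else undefined)
     (restrict ((fun_upd \<omega> (U e) (encY K \<omega>))) S) v"
    proof (cases "v \<in> ?S' \<and> v \<notin> S")
      case True
      then obtain k where k: "v = Y k" "k \<in> {1..K}" by (auto simp: Ysrc_def)
      have k1: "k - 1 < K" using k(2) by auto
      have kk: "k - 1 < length [1..<K+1]" using k1 by (simp del: upt_Suc)
      have k2: "[1..<K+1] ! (k - 1) = k" using k(2) by (subst nth_upt) (simp_all del: upt_Suc)
      have "map (\<lambda>k. \<omega> (Y k)) [1..<K+1] ! (k - 1) = \<omega> (Y k)"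
        using nth_map[OF kk, of "\<lambda>k. \<omega> (Y k)"] k2 by (simp del: upt_Suc)
      hence nth: "(from_nat (encY K \<omega>) :: nat list) ! (k - 1) = \<omega> (Y k)"
        by (simp add: encY_def)
      have r: "restrict (fun_upd \<omega> (U e) (encY K \<omega>)) S (U e) = encY K \<omega>"
        using assms by simp
      have vS: "v \<in> ?S'" "v \<notin> S" using True by auto
      show ?thesis using vS k(1) r nth by simp
    next
      case False thus ?thesis using assms by auto
    qed
  qed
qed

lemma ent_ext0:
  fixes p :: "('e rv \<Rightarrow> nat) pmf"
  assumes "U e \<notin> S"
  shows "(\<lambda>\<omega>. restrict ((fun_upd \<omega> (U e) (x \<omega>))) S) = (\<lambda>\<omega>. restrict \<omega> S)"
  using assms by (auto simp: fun_eq_iff)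

lemma span_sub: "X \<subseteq> f_span X"
proof
  fix x assume "x \<in> X"
  thus "x \<in> f_span X" unfolding f_span_def
    by (intro CollectI exI[of _ "{x}"] exI[of _ "\<lambda>_. 1"]) auto
qed

lemma span_mono: "X \<subseteq> Z \<Longrightarrow> f_span X \<subseteq> f_span Z"
  unfolding f_span_def by blast

lemma span_span: "f_span (f_span X) \<subseteq> f_span X"
proof
  fix v assume "v \<in> f_span (f_span X)"
  then obtain T c where T: "finite T" "T \<subseteq> f_span X" and v: "v = (\<lambda>j. \<Sum>u\<in>T. c u * u j)"
    unfolding f_span_def by blast
  have "\<exists>q. finite (fst q) \<and> fst q \<subseteq> X \<and> (\<forall>j. u j = (\<Sum>w\<in>fst q. snd q w * w j))" if "u \<in> T" for u
  proof -
    from that T(2) obtain Tu cu where "finite Tu" "Tu \<subseteq> X" "u = (\<lambda>j. \<Sum>w\<in>Tu. cu w * w j)"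
      unfolding f_span_def by blast
    thus ?thesis by (intro exI[of _ "(Tu, cu)"]) simp
  qed
  hence "\<forall>u\<in>T. \<exists>q. finite (fst q) \<and> fst q \<subseteq> X \<and> (\<forall>j. u j = (\<Sum>w\<in>fst q. snd q w * w j))" by blast
  from bchoice[OF this] obtain q where q: "\<forall>u\<in>T. finite (fst (q u)) \<and> fst (q u) \<subseteq> X \<and> (\<forall>j. u j = (\<Sum>w\<in>fst (q u). snd (q u) w * w j))"
    by (elim exE)
  define W where "W = (\<Union>u\<in>T. fst (q u))"
  have q1: "\<forall>u\<in>T. finite (fst (q u))" and q2: "\<forall>u\<in>T. fst (q u) \<subseteq> X" using q by simp_all
  have W: "finite W" "W \<subseteq> X" using q1 q2 T(1) unfolding W_def by auto
  define d where "d u w = (if w \<in> fst (q u) then snd (q u) w else 0)" for u w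
  have uj: "u j = (\<Sum>w\<in>W. d u w * w j)" if "u \<in> T" for u j
  proof -
    have qu: "u j = (\<Sum>w\<in>fst (q u). snd (q u) w * w j)" using bspec[OF q that] by (elim conjE) (rule spec)
    have "(\<Sum>w\<in>W. d u w * w j) = (\<Sum>w\<in>W. if w \<in> fst (q u) then snd (q u) w * w j else 0)"
      unfolding d_def by (rule sum.cong) auto
    also have "\<dots> = (\<Sum>w\<in>W \<inter> fst (q u). snd (q u) w * w j)"
      by (rule sum.inter_restrict[OF W(1), symmetric])
    also have "W \<inter> fst (q u) = fst (q u)" using that unfolding W_def by auto
    also have "(\<Sum>w\<in>fst (q u). snd (q u) w * w j) = u j" by (rule qu[symmetric])
    finally show ?thesis by (rule sym)
  qed
  have "v = (\<lambda>j. \<Sum>w\<in>W. (\<Sum>u\<in>T. c u * d u w) * w j)"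
  proof
    fix j
    have "v j = (\<Sum>u\<in>T. c u * u j)" unfolding v by simp
    also have "\<dots> = (\<Sum>u\<in>T. c u * (\<Sum>w\<in>W. d u w * w j))"
    proof (rule sum.cong[OF refl])
      fix u assume uT: "u \<in> T"
      show "c u * u j = c u * (\<Sum>w\<in>W. d u w * w j)" using uj[OF uT, of j] by (rule arg_cong)
    qed
    also have "\<dots> = (\<Sum>u\<in>T. \<Sum>w\<in>W. c u * d u w * w j)"
      by (simp add: sum_distrib_left mult.assoc)
    also have "\<dots> = (\<Sum>w\<in>W. \<Sum>u\<in>T. c u * d u w * w j)" by (rule sum.swap)
    also have "\<dots> = (\<Sum>w\<in>W. (\<Sum>u\<in>T. c u * d u w) * w j)" by (simp add: sum_distrib_right)
    finally show "v j = (\<Sum>w\<in>W. (\<Sum>u\<in>T. c u * d u w) * w j)" .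
  qed
  thus "v \<in> f_span X" using W unfolding f_span_def
    by (intro CollectI exI[of _ W] exI[of _ "\<lambda>w. \<Sum>u\<in>T. c u * d u w"]) simp
qed

lemma span_Un: "f_span (X \<union> f_span B) = f_span (X \<union> B)"
proof
  have "X \<union> f_span B \<subseteq> f_span (X \<union> B)"
    using span_sub[of "X \<union> B"] span_mono[of B "X \<union> B"] by auto
  thus "f_span (X \<union> f_span B) \<subseteq> f_span (X \<union> B)"
    using span_mono span_span by blast
  show "f_span (X \<union> B) \<subseteq> f_span (X \<union> f_span B)"
    using span_sub[of B] by (intro span_mono) auto
qed

lemma span_fspace: "X \<subseteq> fspace m \<Longrightarrow> f_span X \<subseteq> fspace m"
  unfolding f_span_def fspace_def by (auto simp: subset_iff intro!: sum.neutral)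

lemma span_subspace: assumes "X \<subseteq> fspace m" shows "f_subspace m (f_span X)"
proof -
  have z: "(\<lambda>_. 0) \<in> f_span X" unfolding f_span_def
    by (intro CollectI exI[of _ "{}"]) auto
  have a: "(\<lambda>j. v j + w j) \<in> f_span X" if "v \<in> f_span X" "w \<in> f_span X" for v w
  proof -
    have "(\<lambda>j. v j + w j) \<in> f_span (f_span X)"
    proof (cases "v = w")
      case True thus ?thesis using that unfolding f_span_def
        by (intro CollectI exI[of _ "{v}"] exI[of _ "\<lambda>_. 2"]) (auto simp: fun_eq_iff)
    next
      case False thus ?thesis using that unfolding f_span_def
        by (intro CollectI exI[of _ "{v, w}"] exI[of _ "\<lambda>_. 1"]) (auto simp: fun_eq_iff)
    qed
    thus ?thesis using span_span by blast
  qed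
  have s: "(\<lambda>j. c * v j) \<in> f_span X" if "v \<in> f_span X" for v c
  proof -
    have "(\<lambda>j. c * v j) \<in> f_span (f_span X)" using that unfolding f_span_def
      by (intro CollectI exI[of _ "{v}"] exI[of _ "\<lambda>_. c"]) (auto simp: fun_eq_iff)
    thus ?thesis using span_span by blast
  qed
  show ?thesis unfolding f_subspace_def using z a s span_fspace[OF assms] by blast
qed

context
  fixes A :: "('e, 'd) mdcs" and e :: 'e
  assumes valid: "mdcs_valid A" and eE: "e \<in> mE A"
begin

lemma K1: "1 \<le> mK A" using valid unfolding mdcs_valid_def by auto
lemma finE: "finite (mE A)" using valid unfolding mdcs_valid_def by auto
lemma Lev: "d \<in> mD A \<Longrightarrow> 1 \<le> mLev A d \<and> mLev A d \<le> mK A"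
  using valid unfolding mdcs_valid_def by auto

lemma res_L12: assumes "h \<in> L1 A \<inter> L2 A" "h {} = 0"
  shows "res A e h \<in> L1 (contract A e) \<inter> L2 (contract A e)"
proof -
  have s: "res A e h S = h S" if "S \<subseteq> gset (contract A e)" for S
    using that assms(2) by (rule res_eq)
  have YK: "Ysrc (mK A) \<subseteq> gset (contract A e)" by (rule Ysrc_sub') simp
  have Yk: "{Y k} \<subseteq> gset (contract A e)" if "k \<in> {1..mK A}" for k
    using that unfolding gset_def by auto
  have Ue: "{U e'} \<union> Ysrc (mK A) \<subseteq> gset (contract A e)" if "e' \<in> mE A - {e}" for e'
    using that YK unfolding gset_def by auto
  have a1: "h (Ysrc (mK A)) = (\<Sum>k\<in>{1..mK A}. h {Y k})" "nonneg h"
    "\<forall>e'\<in>mE A. condh h {U e'} (Ysrc (mK A)) = 0"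
    using assms(1) unfolding L1_def L2_def by auto
  have "res A e h (Ysrc (mK A)) = (\<Sum>k\<in>{1..mK A}. res A e h {Y k})"
    using a1(1) by (simp add: s[OF YK] s[OF Yk])
  moreover have "\<forall>e'\<in>mE A - {e}. condh (res A e h) {U e'} (Ysrc (mK A)) = 0"
  proof (intro ballI)
    fix e' assume e': "e' \<in> mE A - {e}"
    show "condh (res A e h) {U e'} (Ysrc (mK A)) = 0"
      using a1(3) e' s[OF Ue[OF e']] s[OF YK] unfolding condh_def by simp
  qed
  ultimately show ?thesis unfolding L1_def L2_def using res_nonneg[OF a1(2)] by auto
qed

lemma res_L5: assumes "h \<in> L5 A" "h {} = 0"
  shows "res A e h \<in> L5 (contract A e)"
proof -
  have s: "res A e h S = h S" if "S \<subseteq> gset (contract A e)" for S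
    using that assms(2) by (rule res_eq)
  { fix d assume d: "d \<in> mD A - fanE A e"
    have f: "fanD (contract A e) d = fanD A d" using fanD_contract[OF d] .
    have ne: "e \<notin> fanD A d" using d fanD_e[OF eE] by auto
    have s1: "U ` fanD A d \<subseteq> gset (contract A e)"
      using ne fanD_sub[of A d] unfolding gset_def by auto
    have s2: "Ysrc (mLev A d) \<subseteq> gset (contract A e)"
      using Lev[of d] d by (intro Ysrc_sub') auto
    have "condh (res A e h) (Ysrc (mLev A d)) (U ` fanD (contract A e) d) = 0"
      using assms(1) d s1 s2 unfolding L5_def condh_def f by (auto simp: s)
  }
  thus ?thesis using assms(1) unfolding L5_def by (auto simp: res_nonneg)
qed

lemma sig_Y: "U e \<notin> S \<Longrightarrow> sig A e S = S" unfolding sig_def by auto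

lemma ext_L12: assumes "h \<in> L1 (contract A e) \<inter> L2 (contract A e)" "h {} = 0"
  shows "ext A e h \<in> L1 A \<inter> L2 A"
proof -
  have s: "ext A e h S = h (sig A e S)" if "S \<subseteq> gset A" for S
    using that assms(2) by (rule ext_eq)
  have YK: "Ysrc (mK A) \<subseteq> gset A" by (rule Ysrc_sub) simp
  have Yk: "{Y k} \<subseteq> gset A" if "k \<in> {1..mK A}" for k
    using that unfolding gset_def by auto
  have Ue: "{U e'} \<union> Ysrc (mK A) \<subseteq> gset A" if "e' \<in> mE A" for e'
    using that YK unfolding gset_def by auto
  have sigU: "sig A e ({U e} \<union> Ysrc (mK A)) = Ysrc (mK A)" unfolding sig_def by auto
  have sigU': "sig A e ({U e'} \<union> Ysrc (mK A)) = {U e'} \<union> Ysrc (mK A)" if "e' \<noteq> e" for e'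
    using that unfolding sig_def by auto
  have a1: "h (Ysrc (mK A)) = (\<Sum>k\<in>{1..mK A}. h {Y k})" "nonneg h"
    "\<forall>e'\<in>mE A - {e}. condh h {U e'} (Ysrc (mK A)) = 0"
    using assms(1) unfolding L1_def L2_def by auto
  have sy: "ext A e h {Y k} = h {Y k}" if "k \<in> {1..mK A}" for k
    using s[OF Yk[OF that]] by (simp add: sig_Y)
  have sK: "ext A e h (Ysrc (mK A)) = h (Ysrc (mK A))"
    using s[OF YK] by (simp add: sig_Y)
  have "ext A e h (Ysrc (mK A)) = (\<Sum>k\<in>{1..mK A}. ext A e h {Y k})"
    using a1(1) sK sy by simp
  moreover have "condh (ext A e h) {U e'} (Ysrc (mK A)) = 0" if "e' \<in> mE A" for e'
  proof (cases "e' = e")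
    case True thus ?thesis unfolding condh_def using s[OF Ue[OF that]] sK sigU by simp
  next
    case False thus ?thesis using a1(3) that unfolding condh_def using s[OF Ue[OF that]] sK sigU'[OF False] by simp
  qed
  ultimately show ?thesis unfolding L1_def L2_def using ext_nonneg[OF a1(2)] by auto
qed

lemma ext_L5: assumes "h \<in> L5 (contract A e)" "h {} = 0"
  shows "ext A e h \<in> L5 A"
proof -
  have s: "ext A e h S = h (sig A e S)" if "S \<subseteq> gset A" for S
    using that assms(2) by (rule ext_eq)
  { fix d assume d: "d \<in> mD A"
    have s1: "U ` fanD A d \<subseteq> gset A"
      using fanD_sub[of A d] unfolding gset_def by auto
    have s2: "Ysrc (mLev A d) \<subseteq> gset A"
      using Lev[of d] d by (intro Ysrc_sub) auto
    have "condh (ext A e h) (Ysrc (mLev A d)) (U ` fanD A d) = 0"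
    proof (cases "e \<in> fanD A d")
      case True
      have "Ysrc (mLev A d) \<subseteq> Ysrc (mK A)" using Lev[OF d] by (intro Ysrc_mono) auto
      hence "sig A e (Ysrc (mLev A d) \<union> U ` fanD A d) = sig A e (U ` fanD A d)"
        using True unfolding sig_def by auto
      thus ?thesis using s1 s2 unfolding condh_def by (simp add: s)
    next
      case False
      hence d': "d \<in> mD A - fanE A e" using d fanD_e[OF eE] by auto
      have f: "fanD (contract A e) d = fanD A d" using fanD_contract[OF d'] .
      have "sig A e (Ysrc (mLev A d) \<union> U ` fanD A d) = Ysrc (mLev A d) \<union> U ` fanD A d"
           "sig A e (U ` fanD A d) = U ` fanD A d"
        using False unfolding sig_def by auto
      moreover have "condh h (Ysrc (mLev A d)) (U ` fanD (contract A e) d) = 0"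
        using assms(1) d' unfolding L5_def by auto
      ultimately show ?thesis using s1 s2 f unfolding condh_def by (simp add: s)
    qed
  }
  thus ?thesis using assms(1) unfolding L5_def by (auto simp: ext_nonneg)
qed

lemma region_res:
  assumes "\<forall>h\<in>C. h {} = 0 \<and> res A e h \<in> C'"
  shows "proj_enc (mE A - {e}) ` region_of A (C \<inter> L5 A)
         \<subseteq> region_of (contract A e) (C' \<inter> L5 (contract A e))"
proof
  fix x assume "x \<in> proj_enc (mE A - {e}) ` region_of A (C \<inter> L5 A)"
  then obtain h R where hR: "(h, R) \<in> L4 A" "h \<in> C" "h \<in> L5 A"
    and x: "x = proj_enc (mE A - {e}) (Proj A (h, R))"
    unfolding region_of_def by auto
  define R' where "R' = (\<lambda>i. if i \<in> mE A - {e} then R i else 0)"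
  have h0: "h {} = 0" using assms hR by auto
  have "res A e h {U i} = h {U i}" if "i \<in> mE A - {e}" for i
    using that by (intro res_eq h0) (auto simp: gset_def)
  hence L4: "(res A e h, R') \<in> L4 (contract A e)"
    using hR(1) unfolding L4_def R'_def nonneg_def
    by (auto simp: res_nonneg[unfolded nonneg_def])
  have "res A e h {Y k} = h {Y k}" if "k \<in> {1..mK A}" for k
    using that by (intro res_eq h0) (auto simp: gset_def)
  hence "Proj (contract A e) (res A e h, R') = x"
    unfolding x Proj_def proj_enc_def R'_def by auto
  moreover have "res A e h \<in> C' \<inter> L5 (contract A e)"
    using assms hR res_L5[OF hR(3) h0] by auto
  ultimately show "x \<in> region_of (contract A e) (C' \<inter> L5 (contract A e))"
    unfolding region_of_def using L4 by force
qed

lemma region_ext: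
  assumes "\<forall>h\<in>C'. h {} = 0 \<and> ext A e h \<in> C"
  shows "region_of (contract A e) (C' \<inter> L5 (contract A e))
         \<subseteq> proj_enc (mE A - {e}) ` region_of A (C \<inter> L5 A)"
proof
  fix x assume "x \<in> region_of (contract A e) (C' \<inter> L5 (contract A e))"
  then obtain h R where hR: "(h, R) \<in> L4 (contract A e)" "h \<in> C'" "h \<in> L5 (contract A e)"
    and x: "x = Proj (contract A e) (h, R)"
    unfolding region_of_def by auto
  define R2 where "R2 = R(e := h (Ysrc (mK A)))"
  have h0: "h {} = 0" using assms hR by auto
  have hn: "nonneg h" using hR unfolding L4_def by auto
  have sE: "ext A e h S = h (sig A e S)" if "S \<subseteq> gset A" for S
    using that h0 by (rule ext_eq)
  have "ext A e h {U i} = h {U i}" if "i \<in> mE A - {e}" for i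
    using that by (subst sE) (auto simp: gset_def sig_def)
  moreover have "ext A e h {U e} = h (Ysrc (mK A))"
    using eE by (subst sE) (auto simp: gset_def sig_def)
  ultimately have L4: "(ext A e h, R2) \<in> L4 A"
    using hR(1) hn eE unfolding L4_def R2_def nonneg_def
    by (auto simp: ext_nonneg[OF hn, unfolded nonneg_def])
  have "ext A e h {Y k} = h {Y k}" if "k \<in> {1..mK A}" for k
    using that by (subst sE) (auto simp: gset_def sig_def)
  moreover have "R i = 0" if "i \<notin> mE A - {e}" for i using hR(1) that unfolding L4_def by auto
  ultimately have "proj_enc (mE A - {e}) (Proj A (ext A e h, R2)) = x"
    unfolding x Proj_def proj_enc_def R2_def by (auto intro!: ext)
  moreover have "ext A e h \<in> C \<inter> L5 A"
    using assms hR ext_L5[OF hR(3) h0] by auto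
  ultimately show "x \<in> proj_enc (mE A - {e}) ` region_of A (C \<inter> L5 A)"
    unfolding region_of_def using L4 by force
qed


lemma sig_props: "S \<noteq> {} \<Longrightarrow> S \<subseteq> gset A \<Longrightarrow> sig A e S \<noteq> {} \<and> sig A e S \<subseteq> gset (contract A e)"
  using Ysrc_ne[OF K1] Ysrc_sub'[of "mK A" A e] unfolding sig_def gset_contract by auto

lemma res_normv: "res A e (normv (gset A) g) = normv (gset (contract A e)) g"
  unfolding res_def cmap_def normv_def gset_contract by (auto simp: fun_eq_iff)

lemma ext_normv: "ext A e (normv (gset (contract A e)) g) = normv (gset A) (\<lambda>S. g (sig A e S))"
  unfolding ext_def cmap_def normv_def using sig_props by (auto simp: fun_eq_iff)

lemma res_conic: "res A e ` conic_hull X \<subseteq> conic_hull (res A e ` X)"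
  unfolding res_def by (rule cmap_conic)

lemma ext_conic: "ext A e ` conic_hull X \<subseteq> conic_hull (ext A e ` X)"
  unfolding ext_def by (rule cmap_conic)

lemma res_entropic: "h \<in> entropic A \<Longrightarrow> res A e h \<in> entropic (contract A e)"
  unfolding entropic_def by (auto simp: res_normv)

lemma ext_entropic: assumes "h \<in> entropic (contract A e)" shows "ext A e h \<in> entropic A"
proof -
  obtain p :: "('e rv \<Rightarrow> nat) pmf" where p: "finite (set_pmf p)"
    and h: "h = normv (gset (contract A e)) (\<lambda>S. pmf_entropy (map_pmf (\<lambda>\<omega>. restrict \<omega> S) p))"
    using assms unfolding entropic_def by auto
  define f where "f \<omega> = fun_upd \<omega> (U e) (encY (mK A) \<omega>)" for \<omega> :: "'e rv \<Rightarrow> nat"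
  have eq: "pmf_entropy (map_pmf (\<lambda>\<omega>. restrict \<omega> (sig A e S)) p)
      = pmf_entropy (map_pmf (\<lambda>\<omega>. restrict \<omega> S) (map_pmf f p))" for S
  proof (cases "U e \<in> S")
    case True
    show ?thesis unfolding map_pmf_comp f_def sig_def using True
      by (simp add: ent_ext[OF True])
  next
    case False
    show ?thesis unfolding map_pmf_comp f_def sig_def using False
      by (simp add: ent_ext0[OF False])
  qed
  have "ext A e h = normv (gset A) (\<lambda>S. pmf_entropy (map_pmf (\<lambda>\<omega>. restrict \<omega> S) (map_pmf f p)))"
    unfolding h ext_normv eq ..
  moreover have "finite (set_pmf (map_pmf f p))" using p by simp
  ultimately show ?thesis unfolding entropic_def by blast
qed

lemma res_Gv: fixes F :: "'f::{field,finite} itself"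
  shows "h \<in> Gamma_vector F A \<Longrightarrow> res A e h \<in> Gamma_vector F (contract A e)"
proof -
  assume "h \<in> Gamma_vector F A"
  hence "res A e h \<in> conic_hull (res A e ` {normv (gset A) (\<lambda>S. real (f_rank (f_span (\<Union>i\<in>S. Vs i))))
      | (Vs :: 'e rv \<Rightarrow> (nat \<Rightarrow> 'f) set) m. \<forall>i\<in>gset A. f_subspace m (Vs i)})"
    using res_conic unfolding Gamma_vector_def by blast
  moreover have "res A e ` {normv (gset A) (\<lambda>S. real (f_rank (f_span (\<Union>i\<in>S. Vs i))))
      | (Vs :: 'e rv \<Rightarrow> (nat \<Rightarrow> 'f) set) m. \<forall>i\<in>gset A. f_subspace m (Vs i)}
     \<subseteq> {normv (gset (contract A e)) (\<lambda>S. real (f_rank (f_span (\<Union>i\<in>S. Vs i))))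
      | (Vs :: 'e rv \<Rightarrow> (nat \<Rightarrow> 'f) set) m. \<forall>i\<in>gset (contract A e). f_subspace m (Vs i)}"
    by (auto simp: res_normv gset_contract; blast)
  ultimately show ?thesis unfolding Gamma_vector_def using conic_hull_mono by blast
qed

lemma res_Gs: fixes F :: "'f::{field,finite} itself"
  shows "h \<in> Gamma_scalar F A \<Longrightarrow> res A e h \<in> Gamma_scalar F (contract A e)"
proof -
  assume "h \<in> Gamma_scalar F A"
  hence "res A e h \<in> conic_hull (res A e ` {normv (gset A) (\<lambda>S. real (f_rank (col ` S)))
      | (col :: 'e rv \<Rightarrow> nat \<Rightarrow> 'f) m. \<forall>i\<in>gset A. col i \<in> fspace m})"
    using res_conic unfolding Gamma_scalar_def by blast
  moreover have "res A e ` {normv (gset A) (\<lambda>S. real (f_rank (col ` S)))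
      | (col :: 'e rv \<Rightarrow> nat \<Rightarrow> 'f) m. \<forall>i\<in>gset A. col i \<in> fspace m}
     \<subseteq> {normv (gset (contract A e)) (\<lambda>S. real (f_rank (col ` S)))
      | (col :: 'e rv \<Rightarrow> nat \<Rightarrow> 'f) m. \<forall>i\<in>gset (contract A e). col i \<in> fspace m}"
    by (auto simp: res_normv gset_contract; blast)
  ultimately show ?thesis unfolding Gamma_scalar_def using conic_hull_mono by blast
qed

lemma ext_Gv_gen:
  fixes Vs :: "'e rv \<Rightarrow> (nat \<Rightarrow> 'f::field) set"
  assumes "\<forall>i\<in>gset (contract A e). f_subspace m (Vs i)"
  shows "\<exists>Vs2 :: 'e rv \<Rightarrow> (nat \<Rightarrow> 'f) set. (\<forall>i\<in>gset A. f_subspace m (Vs2 i)) \<and>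
    ext A e (normv (gset (contract A e)) (\<lambda>S. real (f_rank (f_span (\<Union>i\<in>S. Vs i)))))
    = normv (gset A) (\<lambda>S. real (f_rank (f_span (\<Union>i\<in>S. Vs2 i))))"
proof -
  define B where "B = (\<Union>i\<in>Ysrc (mK A). Vs i)"
  define Vs2 where "Vs2 = Vs(U e := f_span B)"
  have Bsub: "B \<subseteq> fspace m"
    using assms Ysrc_sub'[of "mK A" A e] unfolding B_def f_subspace_def by blast
  have "\<forall>i\<in>gset A. f_subspace m (Vs2 i)"
    using assms span_subspace[OF Bsub] unfolding Vs2_def gset_contract by auto
  moreover have "f_span (\<Union>i\<in>sig A e S. Vs i) = f_span (\<Union>i\<in>S. Vs2 i)" for S
  proof (cases "U e \<in> S")
    case True
    have "(\<Union>i\<in>S. Vs2 i) = (\<Union>i\<in>S - {U e}. Vs i) \<union> f_span B"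
      using True unfolding Vs2_def by auto
    moreover have "(\<Union>i\<in>sig A e S. Vs i) = (\<Union>i\<in>S - {U e}. Vs i) \<union> B"
      using True unfolding sig_def B_def by auto
    ultimately show ?thesis by (simp add: span_Un)
  next
    case False
    hence "(\<Union>i\<in>S. Vs2 i) = (\<Union>i\<in>S. Vs i)" unfolding Vs2_def by auto
    thus ?thesis using False by (simp add: sig_Y)
  qed
  ultimately show ?thesis by (intro exI[of _ Vs2]) (simp add: ext_normv)
qed

lemma ext_Gv: fixes F :: "'f::{field,finite} itself"
  shows "h \<in> Gamma_vector F (contract A e) \<Longrightarrow> ext A e h \<in> Gamma_vector F A"
proof -
  assume "h \<in> Gamma_vector F (contract A e)"
  hence "ext A e h \<in> conic_hull (ext A e ` {normv (gset (contract A e)) (\<lambda>S. real (f_rank (f_span (\<Union>i\<in>S. Vs i))))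
      | (Vs :: 'e rv \<Rightarrow> (nat \<Rightarrow> 'f) set) m. \<forall>i\<in>gset (contract A e). f_subspace m (Vs i)})"
    using ext_conic unfolding Gamma_vector_def by blast
  moreover have "ext A e ` {normv (gset (contract A e)) (\<lambda>S. real (f_rank (f_span (\<Union>i\<in>S. Vs i))))
      | (Vs :: 'e rv \<Rightarrow> (nat \<Rightarrow> 'f) set) m. \<forall>i\<in>gset (contract A e). f_subspace m (Vs i)}
     \<subseteq> {normv (gset A) (\<lambda>S. real (f_rank (f_span (\<Union>i\<in>S. Vs i))))
      | (Vs :: 'e rv \<Rightarrow> (nat \<Rightarrow> 'f) set) m. \<forall>i\<in>gset A. f_subspace m (Vs i)}"
  proof
    fix x assume "x \<in> ext A e ` {normv (gset (contract A e)) (\<lambda>S. real (f_rank (f_span (\<Union>i\<in>S. Vs i))))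
      | (Vs :: 'e rv \<Rightarrow> (nat \<Rightarrow> 'f) set) m. \<forall>i\<in>gset (contract A e). f_subspace m (Vs i)}"
    then obtain Vs :: "'e rv \<Rightarrow> (nat \<Rightarrow> 'f) set" and m where
      Vs: "\<forall>i\<in>gset (contract A e). f_subspace m (Vs i)"
      and x: "x = ext A e (normv (gset (contract A e)) (\<lambda>S. real (f_rank (f_span (\<Union>i\<in>S. Vs i)))))"
      by blast
    from ext_Gv_gen[OF Vs] x show "x \<in> {normv (gset A) (\<lambda>S. real (f_rank (f_span (\<Union>i\<in>S. Vs i))))
      | (Vs :: 'e rv \<Rightarrow> (nat \<Rightarrow> 'f) set) m. \<forall>i\<in>gset A. f_subspace m (Vs i)}" by blast
  qed
  ultimately show ?thesis unfolding Gamma_vector_def using conic_hull_mono by blast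
qed


lemma Gv0: fixes F :: "'f::{field,finite} itself"
  shows "h \<in> Gamma_vector F B \<Longrightarrow> h {} = 0"
  unfolding Gamma_vector_def by (erule conic_coord0[rotated]) auto

lemma Gs0: fixes F :: "'f::{field,finite} itself"
  shows "h \<in> Gamma_scalar F B \<Longrightarrow> h {} = 0"
  unfolding Gamma_scalar_def by (erule conic_coord0[rotated]) auto

lemma part_rate: "rate_region (contract A e) = proj_enc (mE A - {e}) ` rate_region A"
proof -
  let ?X = "entropic A \<inter> L1 A \<inter> L2 A"
  let ?X' = "entropic (contract A e) \<inter> L1 (contract A e) \<inter> L2 (contract A e)"
  have X0: "\<forall>x\<in>?X. x {} = 0" by (auto simp: entropic_def)
  have X0': "\<forall>x\<in>?X'. x {} = 0" by (auto simp: entropic_def)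
  have resX: "res A e ` ?X \<subseteq> ?X'" using res_entropic res_L12 X0 by blast
  have extX: "ext A e ` ?X' \<subseteq> ?X" using ext_entropic ext_L12 X0' by blast
  have C1: "\<forall>h\<in>closure (conic_hull ?X). h {} = 0 \<and> res A e h \<in> closure (conic_hull ?X')"
  proof
    fix h assume h: "h \<in> closure (conic_hull ?X)"
    have "res A e h \<in> closure (conic_hull (res A e ` ?X))"
      using h cmap_cl_conic unfolding res_def by blast
    also have "\<dots> \<subseteq> closure (conic_hull ?X')"
      by (intro closure_mono conic_hull_mono resX)
    finally show "h {} = 0 \<and> res A e h \<in> closure (conic_hull ?X')"
      using cl_conic_coord0[OF X0 h] by blast
  qed
  have C2: "\<forall>h\<in>closure (conic_hull ?X'). h {} = 0 \<and> ext A e h \<in> closure (conic_hull ?X)"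
  proof
    fix h assume h: "h \<in> closure (conic_hull ?X')"
    have "ext A e h \<in> closure (conic_hull (ext A e ` ?X'))"
      using h cmap_cl_conic unfolding ext_def by blast
    also have "\<dots> \<subseteq> closure (conic_hull ?X)"
      by (intro closure_mono conic_hull_mono extX)
    finally show "h {} = 0 \<and> ext A e h \<in> closure (conic_hull ?X)"
      using cl_conic_coord0[OF X0' h] by blast
  qed
  show ?thesis unfolding rate_region_def
    using region_res[OF C1] region_ext[OF C2] by blast
qed

lemma part_q: fixes F :: "'f::{field,finite} itself"
  shows "rate_region_q F (contract A e) = proj_enc (mE A - {e}) ` rate_region_q F A"
proof -
  let ?X = "Gamma_vector F A \<inter> L1 A \<inter> L2 A"
  let ?X' = "Gamma_vector F (contract A e) \<inter> L1 (contract A e) \<inter> L2 (contract A e)"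
  have r: "rate_region_q F B = region_of B ((Gamma_vector F B \<inter> L1 B \<inter> L2 B) \<inter> L5 B)" for B :: "('e,'d) mdcs"
    by (simp add: rate_region_q_def L125_def Int_assoc)
  have C1: "\<forall>h\<in>?X. h {} = 0 \<and> res A e h \<in> ?X'"
    using res_Gv res_L12 Gv0 by blast
  have C2: "\<forall>h\<in>?X'. h {} = 0 \<and> ext A e h \<in> ?X"
    using ext_Gv ext_L12 Gv0 by blast
  show ?thesis unfolding r using region_res[OF C1] region_ext[OF C2] by blast
qed

lemma part_sq: fixes F :: "'f::{field,finite} itself"
  shows "rate_region_sq F (contract A e) \<supseteq> proj_enc (mE A - {e}) ` rate_region_sq F A"
proof -
  let ?X = "Gamma_scalar F A \<inter> L1 A \<inter> L2 A"
  let ?X' = "Gamma_scalar F (contract A e) \<inter> L1 (contract A e) \<inter> L2 (contract A e)"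
  have r: "rate_region_sq F B = region_of B ((Gamma_scalar F B \<inter> L1 B \<inter> L2 B) \<inter> L5 B)" for B :: "('e,'d) mdcs"
    by (simp add: rate_region_sq_def L125_def Int_assoc)
  have C1: "\<forall>h\<in>?X. h {} = 0 \<and> res A e h \<in> ?X'"
    using res_Gs res_L12 Gs0 by blast
  show ?thesis unfolding r using region_res[OF C1] by blast
qed

lemma part_sp: "rate_region_sp (contract A e) = proj_enc (mE A - {e}) ` rate_region_sp A"
proof
  show "proj_enc (mE A - {e}) ` rate_region_sp A \<subseteq> rate_region_sp (contract A e)"
  proof
    fix x assume "x \<in> proj_enc (mE A - {e}) ` rate_region_sp A"
    then obtain H R Rs where x: "x = proj_enc (mE A - {e}) (H, R)"
      and c: "\<forall>k. 0 \<le> H k" "\<forall>k. k \<notin> {1..mK A} \<longrightarrow> H k = 0"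
      "\<forall>e. 0 \<le> R e" "\<forall>e. e \<notin> mE A \<longrightarrow> R e = 0"
      "\<forall>e\<in>mE A. \<forall>k\<in>{1..mK A}. 0 \<le> Rs e k"
      "\<forall>e\<in>mE A. R e = (\<Sum>i\<in>{1..mK A}. Rs e i)"
      "\<forall>d\<in>mD A. \<forall>i\<in>{1..mLev A d}. (\<Sum>e\<in>fanD A d. Rs e i) \<ge> H i"
      unfolding rate_region_sp_def by blast
    have x': "x = (H, \<lambda>i. if i \<in> mE A - {e} then R i else 0)" unfolding x proj_enc_def by (simp add: fun_eq_iff)
    have dec: "\<forall>d\<in>mD (contract A e). \<forall>i\<in>{1..mLev (contract A e) d}.
        (\<Sum>e\<in>fanD (contract A e) d. Rs e i) \<ge> H i"
    proof (intro ballI)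
      fix d i assume d: "d \<in> mD (contract A e)" and i: "i \<in> {1..mLev (contract A e) d}"
      have d': "d \<in> mD A - fanE A e" using d by simp
      show "(\<Sum>e\<in>fanD (contract A e) d. Rs e i) \<ge> H i"
        unfolding fanD_contract[OF d'] using c(7) d' i by auto
    qed
    show "x \<in> rate_region_sp (contract A e)"
      unfolding x' rate_region_sp_def
    proof (intro CollectI case_prodI exI[of _ Rs] conjI)
      show "\<forall>e'. 0 \<le> (if e' \<in> mE A - {e} then R e' else 0)" using c(3) by simp
    qed (use c(1,2,5,6) dec in auto)
  qed
next
  show "rate_region_sp (contract A e) \<subseteq> proj_enc (mE A - {e}) ` rate_region_sp A"
  proof
    fix x assume "x \<in> rate_region_sp (contract A e)"
    then obtain H R Rs where x: "x = (H, R)"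
      and c: "\<forall>k. 0 \<le> H k" "\<forall>k. k \<notin> {1..mK A} \<longrightarrow> H k = 0"
      "\<forall>e. 0 \<le> R e" "\<forall>e'. e' \<notin> mE A - {e} \<longrightarrow> R e' = 0"
      "\<forall>e'\<in>mE A - {e}. \<forall>k\<in>{1..mK A}. 0 \<le> Rs e' k"
      "\<forall>e'\<in>mE A - {e}. R e' = (\<Sum>i\<in>{1..mK A}. Rs e' i)"
      "\<forall>d\<in>mD A - fanE A e. \<forall>i\<in>{1..mLev A d}. (\<Sum>e\<in>fanD (contract A e) d. Rs e i) \<ge> H i"
      unfolding rate_region_sp_def by auto
    define Rs2 where "Rs2 = Rs(e := H)"
    define R2 where "R2 = R(e := (\<Sum>i\<in>{1..mK A}. H i))"
    have nn: "\<forall>e'\<in>mE A. \<forall>k\<in>{1..mK A}. 0 \<le> Rs2 e' k" using c(1,5) unfolding Rs2_def by auto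
    have dec: "(\<Sum>e'\<in>fanD A d. Rs2 e' i) \<ge> H i" if d: "d \<in> mD A" and i: "i \<in> {1..mLev A d}" for d i
    proof (cases "e \<in> fanD A d")
      case True
      have iK: "i \<in> {1..mK A}" using i Lev[OF d] by auto
      have "H i = Rs2 e i" unfolding Rs2_def by simp
      also have "\<dots> \<le> (\<Sum>e'\<in>fanD A d. Rs2 e' i)"
        using True nn iK fanD_sub[of A d] finite_subset[OF fanD_sub finE]
        by (intro member_le_sum) auto
      finally show ?thesis .
    next
      case False
      hence d': "d \<in> mD A - fanE A e" using d fanD_e[OF eE] by auto
      have "(\<Sum>e'\<in>fanD A d. Rs2 e' i) = (\<Sum>e'\<in>fanD A d. Rs e' i)"
        using False unfolding Rs2_def by (intro sum.cong) auto
      moreover have "(\<Sum>e\<in>fanD (contract A e) d. Rs e i) \<ge> H i" using c(7) d' i by blast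
      ultimately show ?thesis unfolding fanD_contract[OF d'] by simp
    qed
    have "(H, R2) \<in> rate_region_sp A"
      unfolding rate_region_sp_def
    proof (intro CollectI case_prodI exI[of _ Rs2] conjI)
      show "\<forall>e'. 0 \<le> R2 e'" using c(3) sum_nonneg c(1) unfolding R2_def by (simp add: sum_nonneg)
      show "\<forall>e'. e' \<notin> mE A \<longrightarrow> R2 e' = 0" using c(4) eE unfolding R2_def by auto
      show "\<forall>e'\<in>mE A. R2 e' = (\<Sum>i\<in>{1..mK A}. Rs2 e' i)" using c(6) unfolding R2_def Rs2_def by auto
    qed (use c nn dec in auto)
    moreover have "proj_enc (mE A - {e}) (H, R2) = x"
      unfolding x proj_enc_def R2_def using c(4) by (auto simp: fun_eq_iff)
    ultimately show "x \<in> proj_enc (mE A - {e}) ` rate_region_sp A" by force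
  qed
qed

end


theorem theorem5:
  fixes A :: "('e, 'd) mdcs" and e :: 'e and F :: "'f::{field,finite} itself"
  assumes "mdcs_valid A" and "e \<in> mE A"
  shows "rate_region (contract A e) = proj_enc (mE A - {e}) ` rate_region A
       \<and> rate_region_q F (contract A e) = proj_enc (mE A - {e}) ` rate_region_q F A
       \<and> rate_region_sq F (contract A e) \<supseteq> proj_enc (mE A - {e}) ` rate_region_sq F A
       \<and> rate_region_sp (contract A e) = proj_enc (mE A - {e}) ` rate_region_sp A"
  using part_rate[OF assms] part_q[OF assms] part_sq[OF assms] part_sp[OF assms] by blast

end
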